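(* Let $1<s_0<s_1$ and let $u$ be a $C^1$ function on $\mathcal{K}_{[s_0,s_1]}$ which vanishes near the conical boundary. Then there is a universal constant $C$ such that for all $s\in[s_0,s_1]$ and $\alpha\in\{0,1,2\}$, $$\|(s/t)u\|_{L^2(\mathcal{H}^*_s)}+\|s(s/t)^2\partial_\alpha u\|_{L^2(\mathcal{H}^*_s)}\leq C\,F_{\mathrm{con}}(s_0;s,u)^{1/2},$$ where $F_{\mathrm{con}}(s_0;s,u)^{1/2}:=\|(s/t)u\|_{L^2(\mathcal{H}_{s_0})}+E_{\mathrm{con}}(s,u)^{1/2}+\int_{s_0}^{s}s'^{-1}E_{\mathrm{con}}(s',u)^{1/2}ds'$.
   Context: Coordinates $(t,x)\in\mathbb{R}^{2+1}$, $r=|x|$, $s=\sqrt{t^2-r^2}$, $\partial_0=\partial_t$. $\mathcal{K}=\{t>r+1\}$, $\mathcal{H}_s=\{t=\sqrt{s^2+r^2}\}$, $\mathcal{H}_s^*=\mathcal{H}_s\cap\mathcal{K}$, $\mathcal{K}_{[s_0,s_1]}=\{(t,x)\in\mathcal{K}: s_0^2\le t^2-r^2\le s_1^2\}$; "vanishes near the conical boundary" means vanishing in a neighbourhood of $\{t=r+1\}$. $\|f\|_{L^2(\mathcal{H}_s)}$ is the $L^2(\mathbb{R}^2)$ norm of $x\mapsto f(\sqrt{s^2+|x|^2},x)$ (restricted to $|x|\le (s^2-1)/2$ for $\mathcal{H}_s^*$); $\int_{\mathcal{H}_s}f\,dx$ is defined likewise. $\bar\partial_s=(s/t)\partial_t$,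 $\bar\partial_a=(x^a/t)\partial_t+\partial_a$, $K:=s\bar\partial_s+2x^a\bar\partial_a$, $E_{\mathrm{con}}(s,u):=\int_{\mathcal{H}_s}\big((Ku+u)^2+\sum_a|s\bar\partial_a u|^2\big)dx$. *)

theory Defs
  imports "HOL-Analysis.Analysis"
begin

text \<open>Points of R^{2+1} are pairs (t, x) with t :: real and x = (x1, x2) :: real \<times> real;
  the norm on real \<times> real is the Euclidean one, so norm x = r = |x|.\<close>

type_synonym pt = "real \<times> (real \<times> real)"

definition Kcone :: "pt set" where
  "Kcone = {(t, x). t > norm x + 1}"

definition hs :: "pt \<Rightarrow> real" where
  "hs p = sqrt ((fst p)\<^sup>2 - (norm (snd p))\<^sup>2)"

definition Kslab :: "real \<Rightarrow> real \<Rightarrow> pt set" where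
  "Kslab s0 s1 = {(t, x). (t, x) \<in> Kcone \<and> s0\<^sup>2 \<le> t\<^sup>2 - (norm x)\<^sup>2 \<and> t\<^sup>2 - (norm x)\<^sup>2 \<le> s1\<^sup>2}"

definition hyp :: "real \<Rightarrow> real \<times> real \<Rightarrow> pt" where
  "hyp s x = (sqrt (s\<^sup>2 + (norm x)\<^sup>2), x)"

text \<open>H_s^* = H_s \<inter> K corresponds to |x| < (s^2-1)/2\<close>
definition L2Hstar :: "real \<Rightarrow> (pt \<Rightarrow> real) \<Rightarrow> real" where
  "L2Hstar s f = sqrt (integral (ball 0 ((s\<^sup>2 - 1) / 2)) (\<lambda>x. (f (hyp s x))\<^sup>2))"

text \<open>C^1 on a (not necessarily open) set S: C^1 on some open neighbourhood of S\<close>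
definition C1_on :: "pt set \<Rightarrow> (pt \<Rightarrow> real) \<Rightarrow> bool" where
  "C1_on S u \<longleftrightarrow> (\<exists>U u'. open U \<and> S \<subseteq> U \<and>
      (\<forall>p\<in>U. (u has_derivative u' p) (at p)) \<and>
      (\<forall>v. continuous_on U (\<lambda>p. u' p v)))"

definition vanishes_near_cone_boundary :: "pt set \<Rightarrow> (pt \<Rightarrow> real) \<Rightarrow> bool" where
  "vanishes_near_cone_boundary S u \<longleftrightarrow> (\<exists>N. open N \<and> {(t, x). t = norm x + 1} \<subseteq> N \<and>
      (\<forall>p\<in>N \<inter> S. u p = 0))"

definition edir :: "nat \<Rightarrow> pt" where
  "edir \<alpha> = (if \<alpha> = 0 then (1, 0, 0) else if \<alpha> = 1 then (0, 1, 0) else (0, 0, 1))"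

definition pd :: "(pt \<Rightarrow> real) \<Rightarrow> nat \<Rightarrow> pt \<Rightarrow> real" where
  "pd u \<alpha> p = frechet_derivative u (at p) (edir \<alpha>)"

definition pbar :: "(pt \<Rightarrow> real) \<Rightarrow> nat \<Rightarrow> pt \<Rightarrow> real" where
  "pbar u a p = (if a = 1 then fst (snd p) else snd (snd p)) / fst p * pd u 0 p + pd u a p"

text \<open>K u = s \<bar>\<partial>_s u + 2 x^a \<bar>\<partial>_a u, with \<bar>\<partial>_s = (s/t)\<partial>_t\<close>
definition Kop :: "(pt \<Rightarrow> real) \<Rightarrow> pt \<Rightarrow> real" where
  "Kop u p = hs p * (hs p / fst p) * pd u 0 p
      + 2 * (fst (snd p) * pbar u 1 p + snd (snd p) * pbar u 2 p)"

text \<open>E_con(s,u); u lives on K, so the integral over H_s is over H_s^*\<close>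
definition Econ :: "real \<Rightarrow> (pt \<Rightarrow> real) \<Rightarrow> real" where
  "Econ s u = integral (ball 0 ((s\<^sup>2 - 1) / 2))
     (\<lambda>x. (Kop u (hyp s x) + u (hyp s x))\<^sup>2
          + (s * pbar u 1 (hyp s x))\<^sup>2 + (s * pbar u 2 (hyp s x))\<^sup>2)"

definition Fcon_sqrt :: "real \<Rightarrow> real \<Rightarrow> (pt \<Rightarrow> real) \<Rightarrow> real" where
  "Fcon_sqrt s0 s u = L2Hstar s0 (\<lambda>p. hs p / fst p * u p) + sqrt (Econ s u)
     + integral {s0..s} (\<lambda>s'. sqrt (Econ s' u) / s')"

end

theory Submission
  imports Defs
begin

lemma fst_hyp[simp]: "fst (hyp s x) = sqrt (s\<^sup>2 + (norm x)\<^sup>2)" by (simp add: hyp_def)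
lemma snd_hyp[simp]: "snd (hyp s x) = x" by (simp add: hyp_def)
lemma hs_hyp: "s \<ge> 0 \<Longrightarrow> hs (hyp s x) = s" by (simp add: hs_def hyp_def)

lemma hyp_Kcone_iff: assumes "s > 0" shows "hyp s x \<in> Kcone \<longleftrightarrow> norm x < (s\<^sup>2 - 1) / 2"
proof -
  have "hyp s x \<in> Kcone \<longleftrightarrow> norm x + 1 < sqrt (s\<^sup>2 + (norm x)\<^sup>2)"
    by (simp add: Kcone_def hyp_def)
  also have "\<dots> \<longleftrightarrow> (norm x + 1)\<^sup>2 < s\<^sup>2 + (norm x)\<^sup>2"
  proof -
    have "norm x + 1 = sqrt ((norm x + 1)\<^sup>2)" by simp
    then show ?thesis by (metis real_sqrt_less_iff)
  qed
  also have "\<dots> \<longleftrightarrow> norm x < (s\<^sup>2 - 1) / 2" by (simp add: power2_eq_square field_simps)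
  finally show ?thesis .
qed

lemma hyp_Kslab: assumes "s0 \<le> s" "s \<le> s1" "0 < s0" "norm x < (s\<^sup>2 - 1) / 2"
  shows "hyp s x \<in> Kslab s0 s1"
proof -
  have "hyp s x \<in> Kcone" using hyp_Kcone_iff assms by auto
  moreover have "(sqrt (s\<^sup>2 + (norm x)\<^sup>2))\<^sup>2 - (norm x)\<^sup>2 = s\<^sup>2" by simp
  moreover have "s0\<^sup>2 \<le> s\<^sup>2" "s\<^sup>2 \<le> s1\<^sup>2" using assms by (auto intro!: power_mono)
  ultimately show ?thesis unfolding Kslab_def hyp_def by auto
qed

lemma hyp_line: assumes "s > 0" "norm x = (s\<^sup>2 - 1) / 2"
  shows "hyp s x \<in> {(t, x). t = norm x + 1}"
proof -
  have "s\<^sup>2 + (norm x)\<^sup>2 = (norm x + 1)\<^sup>2" using assms(2) by (simp add: power2_eq_square field_simps)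
  then have "sqrt (s\<^sup>2 + (norm x)\<^sup>2) = norm x + 1" by simp
  then show ?thesis by (simp add: hyp_def)
qed

lemma cont_hyp: "continuous_on A (\<lambda>z. hyp (fst z) (snd z))"
  unfolding hyp_def by (intro continuous_intros)

lemma isCont_hyp: "isCont (\<lambda>z. hyp (fst z) (snd z)) z"
  using cont_hyp[of UNIV] continuous_on_eq_continuous_at by blast

lemma isCont_hyp1: "isCont (\<lambda>s. hyp s x) s"
  unfolding hyp_def by (intro continuous_intros)

lemma cont_within_local:
  assumes "\<forall>\<^sub>F y in nhds z. f y = g y" "isCont g z"
  shows "continuous (at z within S) f"
  using assms isCont_cong continuous_at_imp_continuous_within by blast

definition ext :: "(pt \<Rightarrow> real) \<Rightarrow> real \<times> (real \<times> real) \<Rightarrow> real" where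
  "ext g z = (if norm (snd z) < ((fst z)\<^sup>2 - 1) / 2 then g (hyp (fst z) (snd z)) else 0)"

lemma ext_cont:
  assumes U: "open U" "Kslab s0 s1 \<subseteq> U" "continuous_on U g"
    and N: "open N" "{(t, x). t = norm x + 1} \<subseteq> N" "\<forall>p\<in>N \<inter> Kslab s0 s1. g p = 0"
    and s0: "0 < s0"
  shows "continuous_on ({s0..s1} \<times> UNIV) (ext g)"
  unfolding continuous_on_eq_continuous_within
proof
  fix z assume z: "z \<in> {s0..s1} \<times> (UNIV :: (real \<times> real) set)"
  obtain \<sigma> x where zd: "z = (\<sigma>, x)" by (cases z)
  have \<sigma>: "s0 \<le> \<sigma>" "\<sigma> \<le> s1" "\<sigma> > 0" using z zd s0 by auto
  let ?H = "\<lambda>z. hyp (fst z) (snd z)"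
  let ?O = "{z::real \<times> (real \<times> real). norm (snd z) < ((fst z)\<^sup>2 - 1) / 2}"
  let ?O' = "{z::real \<times> (real \<times> real). norm (snd z) > ((fst z)\<^sup>2 - 1) / 2}"
  have oO: "open ?O" by (intro open_Collect_less continuous_intros) auto
  have oO': "open ?O'" by (intro open_Collect_less continuous_intros) auto
  consider "norm x < (\<sigma>\<^sup>2 - 1) / 2" | "norm x > (\<sigma>\<^sup>2 - 1) / 2" | "norm x = (\<sigma>\<^sup>2 - 1) / 2"
    by linarith
  then show "continuous (at z within {s0..s1} \<times> UNIV) (ext g)"
  proof cases
    case 1
    have ev: "\<forall>\<^sub>F y in nhds z. ext g y = (g \<circ> ?H) y"
      using eventually_nhds_in_open[OF oO, of z] 1 zd
      by (auto simp: ext_def elim!: eventually_mono)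
    have "?H z \<in> U" using hyp_Kslab[OF \<sigma>(1,2) s0 1] U(2) zd by auto
    then have "isCont g (?H z)" using U(1,3) continuous_on_eq_continuous_at by blast
    then have "isCont (g \<circ> ?H) z" using isCont_hyp continuous_at_compose by blast
    then show ?thesis using cont_within_local ev by blast
  next
    case 2
    have ev: "\<forall>\<^sub>F y in nhds z. ext g y = (\<lambda>_. 0) y"
      using eventually_nhds_in_open[OF oO', of z] 2 zd
      by (auto simp: ext_def elim!: eventually_mono)
    then show ?thesis using cont_within_local[OF ev] by simp
  next
    case 3
    have "?H z \<in> N" using hyp_line[OF \<sigma>(3) 3] N(2) zd by auto
    then have evN: "\<forall>\<^sub>F y in nhds z. ?H y \<in> N"
    proof -
      have "open (?H -` N)" using continuous_open_vimage[OF N(1), of ?H] isCont_hyp by blast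
      then show ?thesis using eventually_nhds_in_open[of "?H -` N" z] \<open>?H z \<in> N\<close> by simp
    qed
    have ez: "ext g z = 0" using 3 zd by (simp add: ext_def)
    have "\<forall>\<^sub>F y in at z within {s0..s1} \<times> UNIV. ext g y = 0"
      unfolding eventually_at_filter
    proof (rule eventually_mono[OF evN], intro impI)
      fix y assume y: "?H y \<in> N" "y \<noteq> z" "y \<in> {s0..s1} \<times> (UNIV :: (real \<times> real) set)"
      show "ext g y = 0"
      proof (cases "norm (snd y) < ((fst y)\<^sup>2 - 1) / 2")
        case True
        have "?H y \<in> Kslab s0 s1" using y(3) s0 by (intro hyp_Kslab True) auto
        then show ?thesis using y(1) N(3) True by (simp add: ext_def)
      qed (simp add: ext_def)
    qed
    then show ?thesis unfolding continuous_within ez by (rule tendsto_eventually)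
  qed
qed

lemma Kcone_eq: "Kcone = {p. norm (snd p) + 1 < fst p}" by (auto simp: Kcone_def)
lemma open_Kcone: "open Kcone" unfolding Kcone_eq by (intro open_Collect_less continuous_intros)

lemma Kslab_eq: "Kslab s0 s1 = Kcone \<inter> {p. s0\<^sup>2 \<le> (fst p)\<^sup>2 - (norm (snd p))\<^sup>2 \<and> (fst p)\<^sup>2 - (norm (snd p))\<^sup>2 \<le> s1\<^sup>2}"
  by (auto simp: Kslab_def)

lemma at_within_Ioo_nontriv:
  fixes a b c :: real assumes "a < b" "a \<le> c" "c \<le> b"
  shows "at c within {a<..<b} \<noteq> bot"
proof -
  consider "c = a" | "c = b" | "a < c \<and> c < b" using assms by linarith
  then show ?thesis
  proof cases
    case 1 then show ?thesis using islimpt_greaterThanLessThan1[OF assms(1)] trivial_limit_within by blast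
  next
    case 2 then show ?thesis using islimpt_greaterThanLessThan2[OF assms(1)] trivial_limit_within by blast
  next
    case 3 then have "at c within {a<..<b} = at c" by (intro at_within_open) auto
    then show ?thesis by simp
  qed
qed

locale slabctx =
  fixes s0 s1 :: real and u :: "pt \<Rightarrow> real" and U :: "pt set" and u' :: "pt \<Rightarrow> pt \<Rightarrow> real"
    and N :: "pt set"
  assumes s01: "1 < s0" "s0 < s1"
    and U: "open U" "Kslab s0 s1 \<subseteq> U" "\<forall>p\<in>U. (u has_derivative u' p) (at p)"
      "\<forall>v. continuous_on U (\<lambda>p. u' p v)"
    and N: "open N" "{(t, x). t = norm x + 1} \<subseteq> N" "\<forall>p\<in>N \<inter> Kslab s0 s1. u p = 0"
begin

lemma pd_eq: "p \<in> U \<Longrightarrow> pd u k p = u' p (edir k)"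
  using U(3) frechet_derivative_at unfolding pd_def by metis

lemma cont_pd: "continuous_on U (pd u k)"
  using U(4) continuous_on_cong pd_eq by (metis (no_types, lifting))

lemma cont_u: "continuous_on U u"
  using U(3) has_derivative_continuous continuous_at_imp_continuous_on by blast

lemma pd_vanish:
  assumes p: "p \<in> N \<inter> Kslab s0 s1" shows "pd u k p = 0"
proof -
  obtain t x where pd: "p = (t, x)" by (cases p)
  have pK: "p \<in> Kcone" and sl: "s0\<^sup>2 \<le> t\<^sup>2 - (norm x)\<^sup>2" "t\<^sup>2 - (norm x)\<^sup>2 \<le> s1\<^sup>2"
    using p pd by (auto simp: Kslab_def)
  have t0: "t > 0" using pK pd unfolding Kcone_def by (auto, smt (verit) norm_ge_zero)
  define \<sigma>0 where "\<sigma>0 = sqrt (t\<^sup>2 - (norm x)\<^sup>2)"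
  have s0pos: "0 < s0" using s01 by simp
  have \<sigma>0: "s0 \<le> \<sigma>0" "\<sigma>0 \<le> s1"
    unfolding \<sigma>0_def using sl s0pos s01
    by (metis less_eq_real_def order.trans real_le_lsqrt real_le_rsqrt real_sqrt_ge_zero zero_le_power2 order_less_le_trans)+
  have "(sqrt (t\<^sup>2 - (norm x)\<^sup>2))\<^sup>2 = t\<^sup>2 - (norm x)\<^sup>2" using sl s0pos
    by (intro real_sqrt_pow2) (smt (verit) zero_le_power2)
  then have "sqrt (\<sigma>0\<^sup>2 + (norm x)\<^sup>2) = t" using t0 unfolding \<sigma>0_def by simp
  then have hp: "hyp \<sigma>0 x = p" using pd by (simp add: hyp_def)
  define V where "V = N \<inter> U \<inter> Kcone \<inter> {q. s0\<^sup>2 < (fst q)\<^sup>2 - (norm (snd q))\<^sup>2}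
     \<inter> {q. (fst q)\<^sup>2 - (norm (snd q))\<^sup>2 < s1\<^sup>2}"
  have oV: "open V" unfolding V_def
    by (intro open_Int N(1) U(1) open_Kcone open_Collect_less continuous_intros)
  have VS: "V \<subseteq> N \<inter> Kslab s0 s1" unfolding V_def Kslab_eq by auto
  have V0: "pd u k q = 0" if q: "q \<in> V" for q
  proof -
    have qU: "q \<in> U" using q V_def by auto
    have "((\<lambda>_. 0) has_derivative (\<lambda>_. 0)) (at q)" by simp
    then have "(u has_derivative (\<lambda>_. 0)) (at q)"
      by (rule has_derivative_transform_within_open[OF _ oV q]) (use VS N(3) in auto)
    then show ?thesis unfolding pd_def using frechet_derivative_at by metis
  qed
  let ?F = "at \<sigma>0 within {s0<..<s1}"
  have nt: "?F \<noteq> bot" using at_within_Ioo_nontriv[OF s01(2) \<sigma>0] .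
  have pU: "p \<in> U" using p U(2) by auto
  have "isCont (pd u k) p" using cont_pd U(1) pU continuous_on_eq_continuous_at by blast
  then have "isCont (\<lambda>\<sigma>. pd u k (hyp \<sigma> x)) \<sigma>0"
    using continuous_at_compose[OF isCont_hyp1[where x=x and s=\<sigma>0]] hp unfolding o_def by auto
  then have lim: "((\<lambda>\<sigma>. pd u k (hyp \<sigma> x)) \<longlongrightarrow> pd u k p) ?F"
    using hp by (simp add: isCont_def tendsto_within_subset[OF _ subset_UNIV])
  have W: "open ((\<lambda>\<sigma>. hyp \<sigma> x) -` (N \<inter> U \<inter> Kcone))"
    by (intro continuous_open_vimage open_Int N(1) U(1) open_Kcone isCont_hyp1)
  have "\<sigma>0 \<in> (\<lambda>\<sigma>. hyp \<sigma> x) -` (N \<inter> U \<inter> Kcone)" using hp p pU pK by auto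
  then have ev1: "\<forall>\<^sub>F \<sigma> in nhds \<sigma>0. hyp \<sigma> x \<in> N \<inter> U \<inter> Kcone"
    using eventually_nhds_in_open[OF W] by simp
  have "\<forall>\<^sub>F \<sigma> in ?F. pd u k (hyp \<sigma> x) = 0"
    unfolding eventually_at_filter
  proof (rule eventually_mono[OF ev1], intro impI)
    fix \<sigma> assume h: "hyp \<sigma> x \<in> N \<inter> U \<inter> Kcone" "\<sigma> \<noteq> \<sigma>0" "\<sigma> \<in> {s0<..<s1}"
    have "\<sigma>\<^sup>2 > s0\<^sup>2" "\<sigma>\<^sup>2 < s1\<^sup>2" using h(3) s0pos by (auto intro!: power_strict_mono)
    then have "hyp \<sigma> x \<in> V" using h(1) unfolding V_def by (simp add: hyp_def)
    then show "pd u k (hyp \<sigma> x) = 0" by (rule V0)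
  qed
  then have "((\<lambda>\<sigma>. pd u k (hyp \<sigma> x)) \<longlongrightarrow> 0) ?F" by (rule tendsto_eventually)
  then show ?thesis using tendsto_unique[OF nt lim] by simp
qed

end

lemma norm_sq_pair: "(norm (x::real \<times> real))\<^sup>2 = (fst x)\<^sup>2 + (snd x)\<^sup>2"
  by (simp add: norm_prod_def)

lemma ball_sub_box: assumes "r \<le> R" shows "ball (0::real\<times>real) r \<subseteq> cbox (-R, -R) (R, R)"
proof
  fix x :: "real \<times> real" assume "x \<in> ball 0 r"
  then have n: "norm x < R" using assms by auto
  have "\<bar>fst x\<bar> \<le> norm x" "\<bar>snd x\<bar> \<le> norm x"
    using norm_fst_le[of "fst x" "snd x"] norm_snd_le[of "snd x" "fst x"] by auto
  then show "x \<in> cbox (-R, -R) (R, R)" using n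
    by (cases x) (auto simp: cbox_Pair_eq)
qed

context slabctx begin

definition "tt z = sqrt ((fst z)\<^sup>2 + (norm (snd z))\<^sup>2)"
definition "U0 = ext u"
definition "DD k = ext (pd u k)"
definition "bb a z = (if a = (1::nat) then fst (snd z) else snd (snd z)) / tt z * DD 0 z + DD a z"
definition "kk z = fst z * (fst z / tt z) * DD 0 z + 2 * (fst (snd z) * bb 1 z + snd (snd z) * bb 2 z) + U0 z"
definition "Abar z = (fst z / tt z * U0 z)\<^sup>2"
definition "Ebar z = (kk z)\<^sup>2 + (fst z * bb 1 z)\<^sup>2 + (fst z * bb 2 z)\<^sup>2"
definition "Dbar z = 2 * fst z * (norm (snd z))\<^sup>2 / ((fst z)\<^sup>2 + (norm (snd z))\<^sup>2)\<^sup>2 * (U0 z)\<^sup>2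
   + ((fst z)\<^sup>2 / ((fst z)\<^sup>2 + (norm (snd z))\<^sup>2)) * 2 * U0 z * (fst z / tt z) * DD 0 z"
definition "Tbar k z = (fst z * (fst z / tt z)\<^sup>2 * DD k z)\<^sup>2"

abbreviation "SS \<equiv> {s0..s1} \<times> (UNIV :: (real \<times> real) set)"

lemma s0pos: "0 < s0" using s01 by simp

lemma cont_U0: "continuous_on SS U0"
  unfolding U0_def by (rule ext_cont[OF U(1,2) cont_u N(1,2,3) s0pos])

lemma cont_DD: "continuous_on SS (DD k)"
  unfolding DD_def by (rule ext_cont[OF U(1,2) cont_pd N(1,2)]) (use pd_vanish s0pos in auto)

lemma tt_pos: "z \<in> SS \<Longrightarrow> tt z > 0" unfolding tt_def using s0pos
  by (auto intro!: add_pos_nonneg)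

lemma den_pos: "z \<in> SS \<Longrightarrow> (fst z)\<^sup>2 + (norm (snd z))\<^sup>2 > 0" using s0pos
  by (auto intro!: add_pos_nonneg)

lemma den_nz[simp]: "s0 \<le> a \<Longrightarrow> a\<^sup>2 + (norm (b::real\<times>real))\<^sup>2 \<noteq> 0"
proof -
  assume "s0 \<le> a" then have "a > 0" using s0pos by auto
  then have "a\<^sup>2 > 0" by simp
  then have "a\<^sup>2 + (norm b)\<^sup>2 > 0" by (intro add_pos_nonneg) auto
  then show ?thesis by (metis order_less_irrefl)
qed
lemma tt_nz[simp]: "s0 \<le> a \<Longrightarrow> tt (a, b::real\<times>real) \<noteq> 0"
  unfolding tt_def using den_nz by simp

lemma cont_tt: "continuous_on A tt" unfolding tt_def by (intro continuous_intros)

lemma cont_bb: "continuous_on SS (bb a)"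
  unfolding bb_def by (cases "a = 1") (auto intro!: continuous_intros cont_DD cont_tt)

lemma cont_kk: "continuous_on SS kk"
  unfolding kk_def
  by (auto intro!: continuous_intros cont_DD cont_tt cont_bb cont_U0)

lemma cont_Abar: "continuous_on SS Abar"
  unfolding Abar_def
  by (auto intro!: continuous_intros cont_tt cont_U0)

lemma cont_Ebar: "continuous_on SS Ebar"
  unfolding Ebar_def by (intro continuous_intros cont_kk cont_bb)

lemma cont_Dbar: "continuous_on SS Dbar"
  unfolding Dbar_def using s0pos
  by (auto intro!: continuous_intros cont_tt cont_U0 cont_DD)

lemma cont_Tbar: "continuous_on SS (Tbar k)"
  unfolding Tbar_def
  by (auto intro!: continuous_intros cont_tt cont_DD)

lemma ext_out: "\<not> norm (snd z) < ((fst z)\<^sup>2 - 1) / 2 \<Longrightarrow> ext g z = 0"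
  by (simp add: ext_def)

lemma ext_in: "norm (snd z) < ((fst z)\<^sup>2 - 1) / 2 \<Longrightarrow> ext g z = g (hyp (fst z) (snd z))"
  by (simp add: ext_def)

lemma Abar_eq: assumes "\<sigma> > 0"
  shows "(if x \<in> ball 0 ((\<sigma>\<^sup>2 - 1) / 2) then (hs (hyp \<sigma> x) / fst (hyp \<sigma> x) * u (hyp \<sigma> x))\<^sup>2 else 0)
     = Abar (\<sigma>, x)"
  using assms by (auto simp: Abar_def U0_def ext_in ext_out hs_hyp tt_def)

lemma Tbar_eq: assumes "\<sigma> > 0"
  shows "(if x \<in> ball 0 ((\<sigma>\<^sup>2 - 1) / 2) then (hs (hyp \<sigma> x) * (hs (hyp \<sigma> x) / fst (hyp \<sigma> x))\<^sup>2 * pd u k (hyp \<sigma> x))\<^sup>2 else 0)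
     = Tbar k (\<sigma>, x)"
  using assms by (auto simp: Tbar_def DD_def ext_in ext_out hs_hyp tt_def)

lemma Ebar_eq: assumes "\<sigma> > 0"
  shows "(if x \<in> ball 0 ((\<sigma>\<^sup>2 - 1) / 2) then
      (Kop u (hyp \<sigma> x) + u (hyp \<sigma> x))\<^sup>2
          + (\<sigma> * pbar u 1 (hyp \<sigma> x))\<^sup>2 + (\<sigma> * pbar u 2 (hyp \<sigma> x))\<^sup>2 else 0)
     = Ebar (\<sigma>, x)"
proof (cases "x \<in> ball 0 ((\<sigma>\<^sup>2 - 1) / 2)")
  case True
  then have i: "norm (snd (\<sigma>, x)) < ((fst (\<sigma>, x))\<^sup>2 - 1) / 2" by simp
  show ?thesis using True assms
    by (simp add: Ebar_def kk_def bb_def Kop_def pbar_def U0_def DD_def ext_in[OF i] hs_hyp tt_def)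
next
  case False
  then have i: "\<not> norm (snd (\<sigma>, x)) < ((fst (\<sigma>, x))\<^sup>2 - 1) / 2" by simp
  show ?thesis using False
    by (simp add: Ebar_def kk_def bb_def U0_def DD_def ext_out[OF i])
qed

definition "RR = s1\<^sup>2"
abbreviation "BX \<equiv> cbox (-RR, -RR) (RR, RR)"

lemma ball_BX: assumes "\<sigma> \<le> s1" "s0 \<le> \<sigma>" shows "ball 0 ((\<sigma>\<^sup>2 - 1) / 2) \<subseteq> BX"
proof (rule ball_sub_box)
  have "\<sigma>\<^sup>2 \<le> s1\<^sup>2" using assms s0pos by (intro power_mono) auto
  then show "(\<sigma>\<^sup>2 - 1) / 2 \<le> RR" proof -
    have "\<sigma>\<^sup>2 - 1 \<le> 2 * s1\<^sup>2" using \<open>\<sigma>\<^sup>2 \<le> s1\<^sup>2\<close> zero_le_power2[of s1] by linarith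
    then show ?thesis by (simp add: RR_def)
  qed
qed

lemma int_ball_BX: fixes f :: "real \<times> real \<Rightarrow> real" assumes "\<sigma> \<in> {s0..s1}"
  shows "integral (ball 0 ((\<sigma>\<^sup>2 - 1) / 2)) f = integral BX (\<lambda>x. if x \<in> ball 0 ((\<sigma>\<^sup>2 - 1) / 2) then f x else 0)"
  using ball_BX[of \<sigma>] assms integral_restrict_Int[of BX "ball 0 ((\<sigma>\<^sup>2 - 1) / 2)" f]
  by (simp add: Int_absorb2)

lemma cont_slice: fixes f :: "real \<times> (real \<times> real) \<Rightarrow> real" assumes "continuous_on SS f" "\<sigma> \<in> {s0..s1}"
  shows "continuous_on A (\<lambda>x. f (\<sigma>, x))"
  by (rule continuous_on_compose2[OF assms(1)]) (use assms(2) in \<open>auto intro!: continuous_intros\<close>)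

lemma int_slice: fixes f :: "real \<times> (real \<times> real) \<Rightarrow> real" assumes "continuous_on SS f" "\<sigma> \<in> {s0..s1}"
  shows "(\<lambda>x. f (\<sigma>, x)) integrable_on cbox a b"
  by (rule integrable_continuous[OF cont_slice[OF assms, where A="cbox a b"]])

definition "II \<sigma> = integral BX (\<lambda>x. Abar (\<sigma>, x))"
definition "EE \<sigma> = integral BX (\<lambda>x. Ebar (\<sigma>, x))"
definition "TT k \<sigma> = integral BX (\<lambda>x. Tbar k (\<sigma>, x))"

lemma II_eq: "\<sigma> \<in> {s0..s1} \<Longrightarrow> L2Hstar \<sigma> (\<lambda>p. hs p / fst p * u p) = sqrt (II \<sigma>)"
  proof -
  assume a: "\<sigma> \<in> {s0..s1}"
  then have p: "\<sigma> > 0" using s0pos by auto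
  show ?thesis unfolding L2Hstar_def II_def by (subst int_ball_BX[OF a]) (simp only: Abar_eq[OF p])
qed

lemma TT_eq: "\<sigma> \<in> {s0..s1} \<Longrightarrow> L2Hstar \<sigma> (\<lambda>p. hs p * (hs p / fst p)\<^sup>2 * pd u k p) = sqrt (TT k \<sigma>)"
  proof -
  assume a: "\<sigma> \<in> {s0..s1}"
  then have p: "\<sigma> > 0" using s0pos by auto
  show ?thesis unfolding L2Hstar_def TT_def by (subst int_ball_BX[OF a]) (simp only: Tbar_eq[OF p])
qed

lemma EE_eq: "\<sigma> \<in> {s0..s1} \<Longrightarrow> Econ \<sigma> u = EE \<sigma>"
  proof -
  assume a: "\<sigma> \<in> {s0..s1}"
  then have p: "\<sigma> > 0" using s0pos by auto
  show ?thesis unfolding Econ_def EE_def by (subst int_ball_BX[OF a]) (simp only: Ebar_eq[OF p])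
qed

lemma cont_int: fixes f :: "real \<times> (real \<times> real) \<Rightarrow> real"
  assumes "continuous_on SS f" shows "continuous_on {s0..s1} (\<lambda>\<sigma>. integral BX (\<lambda>x. f (\<sigma>, x)))"
proof -
  have "continuous_on ({s0..s1} \<times> BX) f" by (rule continuous_on_subset[OF assms]) auto
  then have "continuous_on ({s0..s1} \<times> BX) (\<lambda>(x, t). f (x, t))" by simp
  then show ?thesis by (rule integral_continuous_on_param)
qed

lemma cont_II: "continuous_on {s0..s1} II" unfolding II_def by (rule cont_int[OF cont_Abar])
lemma cont_EE: "continuous_on {s0..s1} EE" unfolding EE_def by (rule cont_int[OF cont_Ebar])

end

lemma alg9: fixes w c1 c2 k B1 B2 Y :: real
  assumes "\<bar>w\<bar> \<le> 1" "\<bar>c1\<bar> \<le> 1" "\<bar>c2\<bar> \<le> 1" "Y = w * k - 2 * c1 * B1 - 2 * c2 * B2"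
  shows "\<bar>Y\<bar> \<le> \<bar>k\<bar> + 2 * \<bar>B1\<bar> + 2 * \<bar>B2\<bar>"
proof -
  have "\<bar>w * k\<bar> \<le> \<bar>k\<bar>" using assms(1) by (simp add: abs_mult mult_left_le_one_le)
  moreover have "\<bar>c1 * B1\<bar> \<le> \<bar>B1\<bar>" using assms(2) by (simp add: abs_mult mult_left_le_one_le)
  moreover have "\<bar>c2 * B2\<bar> \<le> \<bar>B2\<bar>" using assms(3) by (simp add: abs_mult mult_left_le_one_le)
  ultimately show ?thesis unfolding assms(4) by linarith
qed

lemma sq9: fixes p q r :: real shows "(\<bar>p\<bar> + 2 * \<bar>q\<bar> + 2 * \<bar>r\<bar>)\<^sup>2 \<le> 9 * (p\<^sup>2 + q\<^sup>2 + r\<^sup>2)"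
proof -
  have "9 * (p\<^sup>2 + q\<^sup>2 + r\<^sup>2) - (\<bar>p\<bar> + 2 * \<bar>q\<bar> + 2 * \<bar>r\<bar>)\<^sup>2
     = (2*\<bar>p\<bar> - \<bar>q\<bar>)\<^sup>2 + (2*\<bar>p\<bar> - \<bar>r\<bar>)\<^sup>2 + 4 * (\<bar>q\<bar> - \<bar>r\<bar>)\<^sup>2"
    by (simp add: power2_eq_square algebra_simps)
  moreover have "0 \<le> (2*\<bar>p\<bar> - \<bar>q\<bar>)\<^sup>2 + (2*\<bar>p\<bar> - \<bar>r\<bar>)\<^sup>2 + 4 * (\<bar>q\<bar> - \<bar>r\<bar>)\<^sup>2" by simp
  ultimately show ?thesis by linarith
qed

lemma sq19: fixes p q r :: real shows "(\<bar>p\<bar> + 3 * \<bar>q\<bar> + 3 * \<bar>r\<bar>)\<^sup>2 \<le> 19 * (p\<^sup>2 + q\<^sup>2 + r\<^sup>2)"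
proof -
  have "19 * (p\<^sup>2 + q\<^sup>2 + r\<^sup>2) - (\<bar>p\<bar> + 3 * \<bar>q\<bar> + 3 * \<bar>r\<bar>)\<^sup>2
     = (3*\<bar>p\<bar> - \<bar>q\<bar>)\<^sup>2 + (3*\<bar>p\<bar> - \<bar>r\<bar>)\<^sup>2 + 9 * (\<bar>q\<bar> - \<bar>r\<bar>)\<^sup>2"
    by (simp add: power2_eq_square algebra_simps)
  moreover have "0 \<le> (3*\<bar>p\<bar> - \<bar>q\<bar>)\<^sup>2 + (3*\<bar>p\<bar> - \<bar>r\<bar>)\<^sup>2 + 9 * (\<bar>q\<bar> - \<bar>r\<bar>)\<^sup>2" by simp
  ultimately show ?thesis by linarith
qed

lemma amgm_lam: fixes a Y lam :: real assumes "lam > 0"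
  shows "2 * a * Y \<le> lam * a\<^sup>2 + Y\<^sup>2 / lam"
proof -
  have "0 \<le> (lam * a - Y)\<^sup>2 / lam" using assms by simp
  also have "(lam * a - Y)\<^sup>2 / lam = lam * a\<^sup>2 - 2 * a * Y + Y\<^sup>2 / lam"
    using assms by (simp add: power2_eq_square field_simps)
  finally show ?thesis by linarith
qed

lemma sq2: fixes a b :: real shows "(\<bar>a\<bar> + \<bar>b\<bar>)\<^sup>2 \<le> 2 * a\<^sup>2 + 2 * b\<^sup>2"
proof -
  have "2 * a\<^sup>2 + 2 * b\<^sup>2 - (\<bar>a\<bar> + \<bar>b\<bar>)\<^sup>2 = (\<bar>a\<bar> - \<bar>b\<bar>)\<^sup>2" by (simp add: power2_eq_square algebra_simps)
  then show ?thesis by (metis diff_ge_0_iff_ge zero_le_power2)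
qed

lemma lam_opt: fixes X A E :: real
  assumes "\<And>lam. lam > 0 \<Longrightarrow> X \<le> lam * A + 9 * E / lam" "A \<ge> 0" "E \<ge> 0"
  shows "X \<le> 6 * sqrt A * sqrt E"
proof (cases "A > 0 \<and> E > 0")
  case True
  define lam where "lam = 3 * sqrt E / sqrt A"
  have lp: "lam > 0" using True by (simp add: lam_def)
  have "lam * A = 3 * sqrt E * sqrt A" using True
    by (simp add: lam_def field_simps)
  moreover have "9 * E / lam = 3 * sqrt E * sqrt A" using True
    by (simp add: lam_def field_simps)
  ultimately show ?thesis using assms(1)[OF lp] by (simp add: algebra_simps)
next
  case False
  then have z: "A = 0 \<or> E = 0" using assms by auto
  show ?thesis
  proof (rule ccontr)
    assume "\<not> ?thesis"
    then have Xp: "X > 0" using z by auto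
    show False
    proof (cases "A = 0")
      case True
      define lam where "lam = 18 * E / X + 1"
      have lp: "lam > 0" using Xp assms by (simp add: lam_def add_nonneg_pos)
      have "9 * E / lam \<le> X / 2"
      proof -
        have "9 * E * 2 \<le> X * lam" using Xp by (simp add: lam_def field_simps)
        then show ?thesis using lp by (simp add: field_simps)
      qed
      then show False using assms(1)[OF lp] True Xp by simp
    next
      case False
      then have E0: "E = 0" and Ap: "A > 0" using z assms by auto
      define lam where "lam = X / (2 * A)"
      have lp: "lam > 0" using Xp Ap by (simp add: lam_def)
      have "lam * A = X / 2" using Ap by (simp add: lam_def)
      then show False using assms(1)[OF lp] E0 Xp by simp
    qed
  qed
qed

lemma sqrt_growth:
  fixes I c :: "real \<Rightarrow> real" and a b :: real
  assumes ab: "a \<le> b" and contI: "continuous_on {a..b} I"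
    and der: "\<And>x. a < x \<Longrightarrow> x < b \<Longrightarrow> \<exists>D. (I has_real_derivative D) (at x) \<and> D \<le> 2 * sqrt (I x) * c x"
    and Inn: "\<And>x. a \<le> x \<Longrightarrow> x \<le> b \<Longrightarrow> I x \<ge> 0"
    and contc: "continuous_on {a..b} c" and cnn: "\<And>x. a \<le> x \<Longrightarrow> x \<le> b \<Longrightarrow> c x \<ge> 0"
  shows "sqrt (I b) \<le> sqrt (I a) + integral {a..b} c"
proof -
  have key: "sqrt (I b) \<le> sqrt (I a) + integral {a..b} c + sqrt e" if e: "e > 0" for e
  proof -
    define g where "g x = sqrt (I x + e) - integral {a..x} c" for x
    have ci: "c integrable_on {a..b}" using contc integrable_continuous_real by blast
    have contg: "continuous_on {a..b} g" unfolding g_def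
      by (intro continuous_intros contI indefinite_integral_continuous_1 ci)
    have "g b \<le> g a"
    proof (rule DERIV_nonpos_imp_decreasing_open[OF ab _ contg])
      fix x assume x: "a < x" "x < b"
      obtain D where D: "(I has_real_derivative D) (at x)" "D \<le> 2 * sqrt (I x) * c x" using der[OF x] by blast
      have Ix: "I x + e > 0" using Inn[of x] x e by auto
      have d1: "((\<lambda>x. sqrt (I x + e)) has_real_derivative (D / (2 * sqrt (I x + e)))) (at x)"
      proof -
        have "((\<lambda>x. I x + e) has_real_derivative D) (at x)" using D(1) by (auto intro!: derivative_eq_intros)
        from DERIV_chain2[OF DERIV_real_sqrt[OF Ix] this]
        show ?thesis by (simp add: field_simps)
      qed
      have "((\<lambda>x. integral {a..x} c) has_real_derivative c x) (at x within {a..b})"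
        by (rule integral_has_real_derivative[OF contc]) (use x in auto)
      then have d2: "((\<lambda>x. integral {a..x} c) has_real_derivative c x) (at x)"
        using at_within_Icc_at[OF x] by simp
      have "D / (2 * sqrt (I x + e)) \<le> c x"
      proof -
        have "sqrt (I x) \<le> sqrt (I x + e)" using e by simp
        then have "2 * sqrt (I x) * c x \<le> 2 * sqrt (I x + e) * c x"
          using cnn[of x] x by (intro mult_right_mono) auto
        then have "D \<le> c x * (2 * sqrt (I x + e))" using D(2) by (simp add: algebra_simps)
        moreover have "2 * sqrt (I x + e) > 0" using Ix by simp
        ultimately show ?thesis by (simp add: divide_le_eq)
      qed
      then show "\<exists>y. (g has_real_derivative y) (at x) \<and> y \<le> 0"
        unfolding g_def using DERIV_diff[OF d1 d2] by (intro exI[of _ "D / (2 * sqrt (I x + e)) - c x"]) auto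
    qed
    then have "sqrt (I b + e) \<le> sqrt (I a + e) + integral {a..b} c" unfolding g_def by simp
    moreover have "sqrt (I b) \<le> sqrt (I b + e)" using e by simp
    moreover have "sqrt (I a + e) \<le> sqrt (I a) + sqrt e"
      using Inn[of a] ab e by (intro sqrt_add_le_add_sqrt) auto
    ultimately show ?thesis by linarith
  qed
  show ?thesis
  proof (rule ccontr)
    assume "\<not> ?thesis"
    then have d: "sqrt (I b) - (sqrt (I a) + integral {a..b} c) > 0" by simp
    define e where "e = ((sqrt (I b) - (sqrt (I a) + integral {a..b} c)) / 2)\<^sup>2"
    have ep: "e > 0" using d by (simp add: e_def)
    have "sqrt e = (sqrt (I b) - (sqrt (I a) + integral {a..b} c)) / 2" using d by (simp add: e_def)
    then show False using key[OF ep] d by argo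
  qed
qed

context slabctx begin

lemma deriv_u_hyp:
  assumes s: "\<sigma> > 0" and hU: "hyp \<sigma> x \<in> U"
  shows "((\<lambda>\<sigma>. u (hyp \<sigma> x)) has_real_derivative (\<sigma> / sqrt (\<sigma>\<^sup>2 + (norm x)\<^sup>2) * pd u 0 (hyp \<sigma> x))) (at \<sigma>)"
proof -
  let ?t = "sqrt (\<sigma>\<^sup>2 + (norm x)\<^sup>2)"
  have pos: "\<sigma>\<^sup>2 + (norm x)\<^sup>2 > 0" using s by (simp add: add_pos_nonneg)
  have "((\<lambda>\<sigma>. \<sigma>\<^sup>2 + (norm x)\<^sup>2) has_real_derivative 2 * \<sigma>) (at \<sigma>)"
    by (auto intro!: derivative_eq_intros)
  from DERIV_chain2[OF DERIV_real_sqrt[OF pos] this]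
  have d1: "((\<lambda>\<sigma>. sqrt (\<sigma>\<^sup>2 + (norm x)\<^sup>2)) has_real_derivative \<sigma> / ?t) (at \<sigma>)"
    by (simp add: field_simps)
  have hd: "((\<lambda>\<sigma>. hyp \<sigma> x) has_derivative (\<lambda>h. ((\<sigma> / ?t) * h, (0::real\<times>real)))) (at \<sigma>)"
    unfolding hyp_def
    by (rule has_derivative_Pair[OF d1[unfolded has_field_derivative_def]]) (metis has_derivative_const zero_prod_def)
  have ud: "(u has_derivative u' (hyp \<sigma> x)) (at (hyp \<sigma> x))" using U(3) hU by auto
  have lin: "linear (u' (hyp \<sigma> x))" using has_derivative_bounded_linear[OF ud] bounded_linear.linear by blast
  have "(\<lambda>h. u' (hyp \<sigma> x) ((\<sigma> / ?t) * h, (0::real\<times>real))) = (*) (\<sigma> / ?t * pd u 0 (hyp \<sigma> x))"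
  proof
    fix h :: real
    have eq: "((\<sigma> / ?t) * h, (0::real\<times>real)) = ((\<sigma> / ?t) * h) *\<^sub>R (1, 0, 0)" by (simp add: zero_prod_def)
    have sc: "u' (hyp \<sigma> x) (((\<sigma> / ?t) * h) *\<^sub>R (1, 0, 0)) = ((\<sigma> / ?t) * h) *\<^sub>R u' (hyp \<sigma> x) (1, 0, 0)"
      using lin unfolding linear_iff by blast
    have "u' (hyp \<sigma> x) ((\<sigma> / ?t) * h, (0::real\<times>real)) = ((\<sigma> / ?t) * h) * u' (hyp \<sigma> x) (1, 0, 0)"
      unfolding eq sc by simp
    moreover have "pd u 0 (hyp \<sigma> x) = u' (hyp \<sigma> x) (1, 0, 0)"
      using pd_eq[OF hU] by (simp add: edir_def)
    ultimately show "u' (hyp \<sigma> x) ((\<sigma> / ?t) * h, (0::real\<times>real)) = (\<sigma> / ?t * pd u 0 (hyp \<sigma> x)) * h"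
      by simp
  qed
  then show ?thesis
    unfolding has_field_derivative_def
    using has_derivative_compose[OF hd ud] by simp
qed

lemma ev_inside:
  assumes "norm x < (\<sigma>\<^sup>2 - 1) / 2" "\<sigma> > 0"
  shows "\<forall>\<^sub>F \<tau> in nhds \<sigma>. norm x < (\<tau>\<^sup>2 - 1) / 2 \<and> \<tau> > 0"
proof -
  have "open {\<tau>::real. norm x < (\<tau>\<^sup>2 - 1) / 2}" by (intro open_Collect_less continuous_intros) auto
  moreover have "open {\<tau>::real. 0 < \<tau>}" by (intro open_Collect_less continuous_intros)
  ultimately have "open ({\<tau>::real. norm x < (\<tau>\<^sup>2 - 1) / 2} \<inter> {\<tau>. 0 < \<tau>})" by auto
  from eventually_nhds_in_open[OF this] show ?thesis using assms by simp
qed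

lemma ev_outside:
  assumes "norm x > (\<sigma>\<^sup>2 - 1) / 2"
  shows "\<forall>\<^sub>F \<tau> in nhds \<sigma>. norm x > (\<tau>\<^sup>2 - 1) / 2"
proof -
  have "open {\<tau>::real. norm x > (\<tau>\<^sup>2 - 1) / 2}" by (intro open_Collect_less continuous_intros) auto
  from eventually_nhds_in_open[OF this] show ?thesis using assms by simp
qed

lemma ev_slab:
  assumes "\<sigma> \<in> {s0<..<s1}"
  shows "\<forall>\<^sub>F \<tau> in nhds \<sigma>. \<tau> \<in> {s0<..<s1}"
  using eventually_nhds_in_open[of "{s0<..<s1}" \<sigma>] assms by auto

lemma ev_N:
  assumes "hyp \<sigma> x \<in> N"
  shows "\<forall>\<^sub>F \<tau> in nhds \<sigma>. hyp \<tau> x \<in> N"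
proof -
  have "open ((\<lambda>\<tau>. hyp \<tau> x) -` N)" by (intro continuous_open_vimage N(1) isCont_hyp1)
  from eventually_nhds_in_open[OF this] show ?thesis using assms by simp
qed

lemma U0_zero_near:
  assumes s: "\<sigma> \<in> {s0<..<s1}" and ni: "\<not> norm x < (\<sigma>\<^sup>2 - 1) / 2"
  shows "\<forall>\<^sub>F \<tau> in nhds \<sigma>. U0 (\<tau>, x) = 0"
proof (cases "norm x > (\<sigma>\<^sup>2 - 1) / 2")
  case True
  show ?thesis using ev_outside[OF True]
    by (rule eventually_mono) (simp add: U0_def ext_def)
next
  case False
  then have eq: "norm x = (\<sigma>\<^sup>2 - 1) / 2" using ni by linarith
  have "\<sigma> > 0" using s s0pos by auto
  then have "hyp \<sigma> x \<in> N" using hyp_line[OF _ eq] N(2) by auto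
  from eventually_conj[OF ev_N[OF this] ev_slab[OF s]]
  show ?thesis
  proof (rule eventually_mono)
    fix \<tau> assume h: "hyp \<tau> x \<in> N \<and> \<tau> \<in> {s0<..<s1}"
    show "U0 (\<tau>, x) = 0"
    proof (cases "norm x < (\<tau>\<^sup>2 - 1) / 2")
      case True
      have "hyp \<tau> x \<in> Kslab s0 s1" using h s0pos by (intro hyp_Kslab True) auto
      then show ?thesis using h N(3) True by (simp add: U0_def ext_def)
    qed (simp add: U0_def ext_def)
  qed
qed

lemma deriv_Abar:
  assumes s: "\<sigma> \<in> {s0<..<s1}"
  shows "((\<lambda>\<sigma>. Abar (\<sigma>, x)) has_real_derivative Dbar (\<sigma>, x)) (at \<sigma>)"
proof (cases "norm x < (\<sigma>\<^sup>2 - 1) / 2")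
  case True
  have sp: "\<sigma> > 0" using s s0pos by auto
  define g where "g \<tau> = \<tau>\<^sup>2 / (\<tau>\<^sup>2 + (norm x)\<^sup>2) * (u (hyp \<tau> x))\<^sup>2" for \<tau>
  have ev: "\<forall>\<^sub>F \<tau> in nhds \<sigma>. Abar (\<tau>, x) = g \<tau>"
    using ev_inside[OF True sp]
  proof (rule eventually_mono)
    fix \<tau> assume h: "norm x < (\<tau>\<^sup>2 - 1) / 2 \<and> \<tau> > 0"
    have "(\<tau> / sqrt (\<tau>\<^sup>2 + (norm x)\<^sup>2))\<^sup>2 = \<tau>\<^sup>2 / (\<tau>\<^sup>2 + (norm x)\<^sup>2)"
      by (simp add: power_divide)
    moreover have "(sqrt (\<tau>\<^sup>2 + (norm x)\<^sup>2))\<^sup>2 = \<tau>\<^sup>2 + (norm x)\<^sup>2" by simp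
    ultimately show "Abar (\<tau>, x) = g \<tau>" using h
      by (simp add: Abar_def U0_def ext_def g_def tt_def power_mult_distrib power_divide)
  qed
  have hU: "hyp \<sigma> x \<in> U" using hyp_Kslab[of s0 \<sigma> s1 x] s True s0pos U(2) by auto
  have du: "((\<lambda>\<tau>. u (hyp \<tau> x)) has_real_derivative (\<sigma> / sqrt (\<sigma>\<^sup>2 + (norm x)\<^sup>2) * pd u 0 (hyp \<sigma> x))) (at \<sigma>)"
    by (rule deriv_u_hyp[OF sp hU])
  have du2: "((\<lambda>\<tau>. (u (hyp \<tau> x))\<^sup>2) has_real_derivative 2 * u (hyp \<sigma> x) * (\<sigma> / sqrt (\<sigma>\<^sup>2 + (norm x)\<^sup>2) * pd u 0 (hyp \<sigma> x))) (at \<sigma>)"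
    using DERIV_power[OF du, of 2] by (simp add: algebra_simps)
  have den: "\<sigma>\<^sup>2 + (norm x)\<^sup>2 \<noteq> 0" using sp by (simp add: add_pos_nonneg)
  have dw0: "((\<lambda>\<tau>. \<tau>\<^sup>2 / (\<tau>\<^sup>2 + (norm x)\<^sup>2)) has_real_derivative
      ((2 * \<sigma>) * (\<sigma>\<^sup>2 + (norm x)\<^sup>2) - \<sigma>\<^sup>2 * (2 * \<sigma>)) / ((\<sigma>\<^sup>2 + (norm x)\<^sup>2) * (\<sigma>\<^sup>2 + (norm x)\<^sup>2))) (at \<sigma>)"
    using sp by (rule_tac DERIV_divide) (auto intro!: derivative_eq_intros simp: den)
  have "((2 * \<sigma>) * (\<sigma>\<^sup>2 + (norm x)\<^sup>2) - \<sigma>\<^sup>2 * (2 * \<sigma>)) / ((\<sigma>\<^sup>2 + (norm x)\<^sup>2) * (\<sigma>\<^sup>2 + (norm x)\<^sup>2))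
     = 2 * \<sigma> * (norm x)\<^sup>2 / (\<sigma>\<^sup>2 + (norm x)\<^sup>2)\<^sup>2"
    by (simp add: power2_eq_square algebra_simps)
  with dw0 have dw: "((\<lambda>\<tau>. \<tau>\<^sup>2 / (\<tau>\<^sup>2 + (norm x)\<^sup>2)) has_real_derivative 2 * \<sigma> * (norm x)\<^sup>2 / (\<sigma>\<^sup>2 + (norm x)\<^sup>2)\<^sup>2) (at \<sigma>)"
    by simp
  have dg: "(g has_real_derivative Dbar (\<sigma>, x)) (at \<sigma>)"
    unfolding g_def
    using DERIV_mult[OF dw du2] True
    by (simp add: Dbar_def U0_def DD_def ext_def tt_def algebra_simps)
  show ?thesis using DERIV_cong_ev[OF refl ev refl] dg by simp
next
  case False
  have ev: "\<forall>\<^sub>F \<tau> in nhds \<sigma>. Abar (\<tau>, x) = 0"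
    using U0_zero_near[OF s False] by (rule eventually_mono) (simp add: Abar_def)
  have "Dbar (\<sigma>, x) = 0" using False by (simp add: Dbar_def U0_def ext_def)
  then show ?thesis using DERIV_cong_ev[OF refl ev refl, of 0] by simp
qed

lemma II_deriv:
  assumes s: "\<sigma> \<in> {s0<..<s1}"
  shows "(II has_real_derivative integral BX (\<lambda>x. Dbar (\<sigma>, x))) (at \<sigma>)"
proof -
  have cD: "continuous_on ({s0<..<s1} \<times> BX) Dbar" by (rule continuous_on_subset[OF cont_Dbar]) auto
  have "((\<lambda>\<sigma>. integral BX (\<lambda>x. Abar (\<sigma>, x))) has_real_derivative integral BX (\<lambda>x. Dbar (\<sigma>, x))) (at \<sigma> within {s0<..<s1})"
  proof (rule leibniz_rule_field_derivative[where fx = "\<lambda>\<sigma> x. Dbar (\<sigma>, x)"])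
    fix \<tau> x assume "\<tau> \<in> {s0<..<s1}"
    then show "((\<lambda>\<tau>. Abar (\<tau>, x)) has_real_derivative Dbar (\<tau>, x)) (at \<tau> within {s0<..<s1})"
      using deriv_Abar has_field_derivative_at_within by blast
  next
    fix \<tau> :: real assume "\<tau> \<in> {s0<..<s1}"
    then show "(\<lambda>x. Abar (\<tau>, x)) integrable_on BX" by (intro int_slice[OF cont_Abar]) auto
  next
    show "continuous_on ({s0<..<s1} \<times> BX) (\<lambda>(\<tau>, x). Dbar (\<tau>, x))" using cD by simp
  qed (use s in auto)
  then show ?thesis unfolding II_def using at_within_open[of \<sigma> "{s0<..<s1}"] s by simp
qed

end

lemma T0_alg: fixes a Y k B1 B2 T0 :: real
  assumes "\<bar>Y\<bar> \<le> \<bar>k\<bar> + 2 * \<bar>B1\<bar> + 2 * \<bar>B2\<bar>" "T0 = Y - a"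
  shows "T0\<^sup>2 \<le> 2 * a\<^sup>2 + 38 * (k\<^sup>2 + B1\<^sup>2 + B2\<^sup>2)"
proof -
  have "\<bar>T0\<bar> \<le> \<bar>a\<bar> + \<bar>Y\<bar>" using assms(2) by linarith
  then have "T0\<^sup>2 \<le> (\<bar>a\<bar> + \<bar>Y\<bar>)\<^sup>2" by (metis abs_ge_zero power2_abs power_mono)
  also have "\<dots> \<le> 2 * a\<^sup>2 + 2 * Y\<^sup>2" using sq2[of a Y] by simp
  also have "Y\<^sup>2 \<le> (\<bar>k\<bar> + 2 * \<bar>B1\<bar> + 2 * \<bar>B2\<bar>)\<^sup>2" using assms(1) by (metis abs_ge_zero power2_abs power_mono)
  then have "2 * a\<^sup>2 + 2 * Y\<^sup>2 \<le> 2 * a\<^sup>2 + 18 * (k\<^sup>2 + B1\<^sup>2 + B2\<^sup>2)" using sq9[of k B1 B2] by linarith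
  finally show ?thesis by (smt (verit) zero_le_power2)
qed

lemma Ti_alg: fixes a Y k B1 B2 T0 Bi ci wsq Ti :: real
  assumes "\<bar>Y\<bar> \<le> \<bar>k\<bar> + 2 * \<bar>B1\<bar> + 2 * \<bar>B2\<bar>" "T0 = Y - a" "\<bar>ci\<bar> \<le> 1" "0 \<le> wsq" "wsq \<le> 1"
    "Ti = wsq * Bi - ci * T0" "\<bar>Bi\<bar> \<le> \<bar>B1\<bar> + \<bar>B2\<bar>"
  shows "Ti\<^sup>2 \<le> 2 * a\<^sup>2 + 38 * (k\<^sup>2 + B1\<^sup>2 + B2\<^sup>2)"
proof -
  let ?M = "\<bar>k\<bar> + 3 * \<bar>B1\<bar> + 3 * \<bar>B2\<bar>"
  have "\<bar>wsq * Bi\<bar> \<le> \<bar>Bi\<bar>" using assms(4,5) by (simp add: abs_mult mult_left_le_one_le)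
  moreover have "\<bar>ci * T0\<bar> \<le> \<bar>T0\<bar>" using assms(3) by (simp add: abs_mult mult_left_le_one_le)
  moreover have "\<bar>T0\<bar> \<le> \<bar>a\<bar> + \<bar>Y\<bar>" using assms(2) by linarith
  moreover have "\<bar>Ti\<bar> \<le> \<bar>wsq * Bi\<bar> + \<bar>ci * T0\<bar>" unfolding assms(6) by (rule abs_triangle_ineq4)
  moreover have "\<bar>?M\<bar> = ?M" by simp
  ultimately have "\<bar>Ti\<bar> \<le> \<bar>a\<bar> + \<bar>?M\<bar>" using assms(1,7) by linarith
  then have "Ti\<^sup>2 \<le> (\<bar>a\<bar> + \<bar>?M\<bar>)\<^sup>2" by (metis abs_ge_zero power2_abs power_mono)
  also have "\<dots> \<le> 2 * a\<^sup>2 + 2 * ?M\<^sup>2" using sq2[of a ?M] by simp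
  also have "?M\<^sup>2 \<le> 19 * (k\<^sup>2 + B1\<^sup>2 + B2\<^sup>2)" using sq19[of k B1 B2] by simp
  then have "2 * a\<^sup>2 + 2 * ?M\<^sup>2 \<le> 2 * a\<^sup>2 + 38 * (k\<^sup>2 + B1\<^sup>2 + B2\<^sup>2)" by linarith
  finally show ?thesis .
qed

context slabctx begin

definition "YY z = (fst z / tt z) * kk z - 2 * (fst (snd z) / tt z) * (fst z * bb 1 z)
   - 2 * (snd (snd z) / tt z) * (fst z * bb 2 z)"

lemma geom:
  assumes z: "z \<in> SS"
  shows "tt z > 0" "(tt z)\<^sup>2 = (fst z)\<^sup>2 + (norm (snd z))\<^sup>2" "\<bar>fst z / tt z\<bar> \<le> 1"
    "\<bar>fst (snd z) / tt z\<bar> \<le> 1" "\<bar>snd (snd z) / tt z\<bar> \<le> 1" "fst z > 0"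
proof -
  show tp: "tt z > 0" by (rule tt_pos[OF z])
  show "(tt z)\<^sup>2 = (fst z)\<^sup>2 + (norm (snd z))\<^sup>2" unfolding tt_def by simp
  show sp: "fst z > 0" using z s0pos by auto
  have "fst z \<le> tt z" unfolding tt_def
    by (rule real_le_rsqrt) simp
  then show "\<bar>fst z / tt z\<bar> \<le> 1" using sp tp by simp
  have n: "norm (snd z) \<le> tt z" unfolding tt_def
    by (rule real_le_rsqrt) simp
  have "\<bar>fst (snd z)\<bar> \<le> norm (snd z)" using norm_fst_le[of "fst (snd z)" "snd (snd z)"] by simp
  then have "\<bar>fst (snd z)\<bar> \<le> tt z" using n by linarith
  then show "\<bar>fst (snd z) / tt z\<bar> \<le> 1" using tp by (simp add: abs_divide divide_le_eq_1)
  have "\<bar>snd (snd z)\<bar> \<le> norm (snd z)" using norm_snd_le[of "snd (snd z)" "fst (snd z)"] by simp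
  then have "\<bar>snd (snd z)\<bar> \<le> tt z" using n by linarith
  then show "\<bar>snd (snd z) / tt z\<bar> \<le> 1" using tp by (simp add: abs_divide divide_le_eq_1)
qed

lemma YY_eq: assumes z: "z \<in> SS"
  shows "YY z = fst z * (fst z / tt z)\<^sup>2 * DD 0 z + fst z / tt z * U0 z"
proof -
  have "tt z \<noteq> 0" using geom(1)[OF z] by simp
  then show ?thesis unfolding YY_def kk_def by (simp add: field_simps power2_eq_square)
qed

lemma YY_bound: assumes z: "z \<in> SS"
  shows "\<bar>YY z\<bar> \<le> \<bar>kk z\<bar> + 2 * \<bar>fst z * bb 1 z\<bar> + 2 * \<bar>fst z * bb 2 z\<bar>"
  by (rule alg9[OF geom(3,4,5)[OF z]]) (simp add: YY_def)

lemma Dbar_eq: assumes z: "z \<in> SS"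
  shows "fst z * Dbar z = - 2 * Abar z * (fst z / tt z)\<^sup>2 + 2 * (fst z / tt z * U0 z) * YY z"
proof -
  have t0: "tt z \<noteq> 0" using geom(1)[OF z] by simp
  have t2: "(fst z)\<^sup>2 + (norm (snd z))\<^sup>2 = (tt z)\<^sup>2" using geom(2)[OF z] by simp
  have n2: "(norm (snd z))\<^sup>2 = (tt z)\<^sup>2 - (fst z)\<^sup>2" using geom(2)[OF z] by simp
  show ?thesis unfolding YY_eq[OF z] Dbar_def Abar_def t2 n2 using t0
    by (simp add: field_simps power2_eq_square)
qed

lemma pw_bound: assumes z: "z \<in> SS" and lam: "lam > 0"
  shows "fst z * Dbar z \<le> lam * Abar z + 9 * Ebar z / lam"
proof -
  let ?a = "fst z / tt z * U0 z"
  have A: "Abar z = ?a\<^sup>2" by (simp add: Abar_def)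
  have "fst z * Dbar z \<le> 2 * ?a * YY z"
    unfolding Dbar_eq[OF z] A by (simp add: mult_nonneg_nonneg)
  also have "\<dots> \<le> lam * ?a\<^sup>2 + (YY z)\<^sup>2 / lam" by (rule amgm_lam[OF lam])
  also have "(YY z)\<^sup>2 \<le> 9 * Ebar z"
  proof -
    have "(YY z)\<^sup>2 \<le> (\<bar>kk z\<bar> + 2 * \<bar>fst z * bb 1 z\<bar> + 2 * \<bar>fst z * bb 2 z\<bar>)\<^sup>2"
      using YY_bound[OF z] by (metis abs_ge_zero power2_abs power_mono)
    also have "\<dots> \<le> 9 * Ebar z" unfolding Ebar_def by (rule sq9)
    finally show ?thesis .
  qed
  then have "(YY z)\<^sup>2 / lam \<le> 9 * Ebar z / lam" using lam by (simp add: divide_right_mono)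
  finally show ?thesis unfolding A by simp
qed

lemma Tbar_bound: assumes z: "z \<in> SS" and k: "k \<in> {0, 1, 2::nat}"
  shows "Tbar k z \<le> 2 * Abar z + 38 * Ebar z"
proof -
  let ?a = "fst z / tt z * U0 z" and ?w = "fst z / tt z"
  let ?T0 = "fst z * ?w\<^sup>2 * DD 0 z"
  have A: "Abar z = ?a\<^sup>2" by (simp add: Abar_def)
  have E: "Ebar z = (kk z)\<^sup>2 + (fst z * bb 1 z)\<^sup>2 + (fst z * bb 2 z)\<^sup>2" by (simp add: Ebar_def)
  have T0: "?T0 = YY z - ?a" using YY_eq[OF z] by simp
  have w2: "0 \<le> ?w\<^sup>2" "?w\<^sup>2 \<le> 1" using geom(3)[OF z] by (auto simp: abs_le_square_iff power_le_one_iff abs_square_le_1)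
  have t0: "tt z \<noteq> 0" using geom(1)[OF z] by simp
  consider "k = 0" | "k = 1" | "k = 2" using k by auto
  then show ?thesis
  proof cases
    case 1
    show ?thesis unfolding A E Tbar_def 1 by (rule T0_alg[OF YY_bound[OF z] T0])
  next
    case 2
    have "fst z * ?w\<^sup>2 * DD 1 z = ?w\<^sup>2 * (fst z * bb 1 z) - (fst (snd z) / tt z) * ?T0"
      by (simp add: bb_def algebra_simps)
    then show ?thesis unfolding A E Tbar_def 2
      by (rule Ti_alg[OF YY_bound[OF z] T0 geom(4)[OF z] w2]) simp
  next
    case 3
    have "fst z * ?w\<^sup>2 * DD 2 z = ?w\<^sup>2 * (fst z * bb 2 z) - (snd (snd z) / tt z) * ?T0"
      by (simp add: bb_def algebra_simps)
    then show ?thesis unfolding A E Tbar_def 3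
      by (rule Ti_alg[OF YY_bound[OF z] T0 geom(5)[OF z] w2]) simp
  qed
qed

end

context slabctx begin

lemma Abar_nn: "Abar z \<ge> 0" by (simp add: Abar_def)
lemma Ebar_nn: "Ebar z \<ge> 0" by (simp add: Ebar_def)

lemma II_nn: "\<sigma> \<in> {s0..s1} \<Longrightarrow> II \<sigma> \<ge> 0"
  unfolding II_def by (rule integral_nonneg[OF int_slice[OF cont_Abar]]) (auto simp: Abar_nn)

lemma EE_nn: "\<sigma> \<in> {s0..s1} \<Longrightarrow> EE \<sigma> \<ge> 0"
  unfolding EE_def by (rule integral_nonneg[OF int_slice[OF cont_Ebar]]) (auto simp: Ebar_nn)

lemma II_deriv_bound:
  assumes s: "\<sigma> \<in> {s0<..<s1}"
  shows "\<sigma> * integral BX (\<lambda>x. Dbar (\<sigma>, x)) \<le> 6 * sqrt (II \<sigma>) * sqrt (EE \<sigma>)"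
proof (rule lam_opt)
  have s': "\<sigma> \<in> {s0..s1}" using s by auto
  show "II \<sigma> \<ge> 0" "EE \<sigma> \<ge> 0" using II_nn[OF s'] EE_nn[OF s'] by auto
  fix lam :: real assume lam: "lam > 0"
  have iD: "(\<lambda>x. Dbar (\<sigma>, x)) integrable_on BX" by (rule int_slice[OF cont_Dbar s'])
  have iA: "(\<lambda>x. Abar (\<sigma>, x)) integrable_on BX" by (rule int_slice[OF cont_Abar s'])
  have iE: "(\<lambda>x. Ebar (\<sigma>, x)) integrable_on BX" by (rule int_slice[OF cont_Ebar s'])
  have iA': "(\<lambda>x. lam * Abar (\<sigma>, x)) integrable_on BX" using integrable_on_cmult_left[OF iA, of lam] by simp
  have iE': "(\<lambda>x. (9 / lam) * Ebar (\<sigma>, x)) integrable_on BX" using integrable_on_cmult_left[OF iE, of "9 / lam"] by simp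
  have iD': "(\<lambda>x. \<sigma> * Dbar (\<sigma>, x)) integrable_on BX" using integrable_on_cmult_left[OF iD, of \<sigma>] by simp
  have "\<sigma> * integral BX (\<lambda>x. Dbar (\<sigma>, x)) = integral BX (\<lambda>x. \<sigma> * Dbar (\<sigma>, x))"
    by (rule integral_mult[OF iD])
  also have "\<dots> \<le> integral BX (\<lambda>x. lam * Abar (\<sigma>, x) + (9 / lam) * Ebar (\<sigma>, x))"
  proof (rule integral_le[OF iD' integrable_add[OF iA' iE']])
    fix x :: "real \<times> real"
    have "(\<sigma>, x) \<in> SS" using s' by auto
    from pw_bound[OF this lam] show "\<sigma> * Dbar (\<sigma>, x) \<le> lam * Abar (\<sigma>, x) + (9 / lam) * Ebar (\<sigma>, x)"
      by simp
  qed
  also have "\<dots> = lam * II \<sigma> + 9 * EE \<sigma> / lam"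
    unfolding integral_add[OF iA' iE'] II_def EE_def
    using integral_mult[OF iA, of lam] integral_mult[OF iE, of "9 / lam"] by simp
  finally show "\<sigma> * integral BX (\<lambda>x. Dbar (\<sigma>, x)) \<le> lam * II \<sigma> + 9 * EE \<sigma> / lam" .
qed

lemma TT_bound:
  assumes s': "\<sigma> \<in> {s0..s1}" and k: "k \<in> {0, 1, 2::nat}"
  shows "TT k \<sigma> \<le> 2 * II \<sigma> + 38 * EE \<sigma>"
proof -
  have iT: "(\<lambda>x. Tbar k (\<sigma>, x)) integrable_on BX" by (rule int_slice[OF cont_Tbar s'])
  have iA: "(\<lambda>x. Abar (\<sigma>, x)) integrable_on BX" by (rule int_slice[OF cont_Abar s'])
  have iE: "(\<lambda>x. Ebar (\<sigma>, x)) integrable_on BX" by (rule int_slice[OF cont_Ebar s'])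
  have iA': "(\<lambda>x. 2 * Abar (\<sigma>, x)) integrable_on BX" using integrable_on_cmult_left[OF iA, of 2] by simp
  have iE': "(\<lambda>x. 38 * Ebar (\<sigma>, x)) integrable_on BX" using integrable_on_cmult_left[OF iE, of 38] by simp
  have "TT k \<sigma> \<le> integral BX (\<lambda>x. 2 * Abar (\<sigma>, x) + 38 * Ebar (\<sigma>, x))"
    unfolding TT_def
  proof (rule integral_le[OF iT integrable_add[OF iA' iE']])
    fix x :: "real \<times> real"
    have "(\<sigma>, x) \<in> SS" using s' by auto
    from Tbar_bound[OF this k] show "Tbar k (\<sigma>, x) \<le> 2 * Abar (\<sigma>, x) + 38 * Ebar (\<sigma>, x)" .
  qed
  also have "\<dots> = 2 * II \<sigma> + 38 * EE \<sigma>"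
    unfolding integral_add[OF iA' iE'] II_def EE_def
    using integral_mult[OF iA, of 2] integral_mult[OF iE, of 38] by simp
  finally show ?thesis .
qed

lemma main_bound:
  assumes s: "s \<in> {s0..s1}" and k: "k \<in> {0, 1, 2::nat}"
  shows "L2Hstar s (\<lambda>p. hs p / fst p * u p) + L2Hstar s (\<lambda>p. hs p * (hs p / fst p)\<^sup>2 * pd u k p)
     \<le> 8 * Fcon_sqrt s0 s u"
proof -
  have s0in: "s0 \<in> {s0..s1}" using s01 by auto
  have sub: "{s0..s} \<subseteq> {s0..s1}" using s by auto
  define c where "c \<sigma> = 3 * (sqrt (EE \<sigma>) / \<sigma>)" for \<sigma>
  define J where "J = integral {s0..s} (\<lambda>\<sigma>. sqrt (EE \<sigma>) / \<sigma>)"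
  have contq: "continuous_on {s0..s} (\<lambda>\<sigma>. sqrt (EE \<sigma>) / \<sigma>)"
    using s0pos by (intro continuous_intros continuous_on_subset[OF cont_EE sub]) auto
  have contc: "continuous_on {s0..s} c" unfolding c_def by (intro continuous_intros contq)
  have growth: "sqrt (II s) \<le> sqrt (II s0) + integral {s0..s} c"
  proof (rule sqrt_growth)
    show "s0 \<le> s" using s by auto
    show "continuous_on {s0..s} II" by (rule continuous_on_subset[OF cont_II sub])
    show "continuous_on {s0..s} c" by (rule contc)
  next
    fix x assume x: "s0 < x" "x < s"
    then have xs: "x \<in> {s0<..<s1}" using s by auto
    have xp: "x > 0" using x s0pos by auto
    have "x * integral BX (\<lambda>y. Dbar (x, y)) \<le> 6 * sqrt (II x) * sqrt (EE x)" by (rule II_deriv_bound[OF xs])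
    then have "integral BX (\<lambda>y. Dbar (x, y)) \<le> 2 * sqrt (II x) * c x"
      using xp by (simp add: c_def field_simps)
    then show "\<exists>D. (II has_real_derivative D) (at x) \<and> D \<le> 2 * sqrt (II x) * c x"
      using II_deriv[OF xs] by blast
  next
    fix x assume "s0 \<le> x" "x \<le> s"
    then have xin: "x \<in> {s0..s1}" using s by auto
    show "II x \<ge> 0" by (rule II_nn[OF xin])
    show "c x \<ge> 0" unfolding c_def using EE_nn[OF xin] xin s0pos by auto
  qed
  have ic: "integral {s0..s} c = 3 * J"
    unfolding c_def J_def using integral_mult[OF integrable_continuous_real[OF contq], of 3] by simp
  have Jnn: "J \<ge> 0" unfolding J_def
    by (rule integral_nonneg[OF integrable_continuous_real[OF contq]]) (use EE_nn sub s0pos in auto)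
  have Fc: "Fcon_sqrt s0 s u = sqrt (II s0) + sqrt (EE s) + J"
  proof -
    have "integral {s0..s} (\<lambda>s'. sqrt (Econ s' u) / s') = J"
      unfolding J_def by (rule integral_cong) (use EE_eq sub in auto)
    then show ?thesis unfolding Fcon_sqrt_def using II_eq[OF s0in] EE_eq[OF s] by simp
  qed
  have I_nn: "II s \<ge> 0" and E_nn: "EE s \<ge> 0" using II_nn[OF s] EE_nn[OF s] by auto
  have "sqrt (TT k s) \<le> sqrt (2 * II s + 38 * EE s)" using TT_bound[OF s k] by simp
  also have "\<dots> \<le> sqrt (2 * II s) + sqrt (38 * EE s)"
    using I_nn E_nn by (intro sqrt_add_le_add_sqrt) auto
  also have "\<dots> = sqrt 2 * sqrt (II s) + sqrt 38 * sqrt (EE s)" by (simp add: real_sqrt_mult)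
  finally have T: "sqrt (TT k s) \<le> sqrt 2 * sqrt (II s) + sqrt 38 * sqrt (EE s)" .
  have s2: "sqrt 2 \<le> 3 / 2"
  proof -
    have "sqrt 2 \<le> sqrt ((3/2)\<^sup>2)" by (intro real_sqrt_le_mono) (simp add: power2_eq_square)
    then show ?thesis by simp
  qed
  have s38: "sqrt 38 \<le> 8"
  proof -
    have "sqrt 38 \<le> sqrt (8\<^sup>2)" by (intro real_sqrt_le_mono) (simp add: power2_eq_square)
    then show ?thesis by simp
  qed
  have a1: "sqrt 2 * sqrt (II s) \<le> 3 / 2 * sqrt (II s)" using s2 I_nn by (intro mult_right_mono) auto
  have a2: "sqrt 38 * sqrt (EE s) \<le> 8 * sqrt (EE s)" using s38 E_nn by (intro mult_right_mono) auto
  have I0: "sqrt (II s0) \<ge> 0" using II_nn[OF s0in] by simp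
  have E0: "sqrt (EE s) \<ge> 0" using E_nn by simp
  show ?thesis
    unfolding II_eq[OF s] TT_eq[OF s] Fc
    using T a1 a2 growth ic Jnn I0 E0 by argo
qed

end

theorem proposition2p3:
  shows "\<exists>C::real. \<forall>s0 s1 (u :: pt \<Rightarrow> real).
     1 < s0 \<and> s0 < s1 \<and> C1_on (Kslab s0 s1) u \<and> vanishes_near_cone_boundary (Kslab s0 s1) u \<longrightarrow>
     (\<forall>s\<in>{s0..s1}. \<forall>\<alpha>\<in>{0, 1, 2::nat}.
        L2Hstar s (\<lambda>p. hs p / fst p * u p)
        + L2Hstar s (\<lambda>p. hs p * (hs p / fst p)\<^sup>2 * pd u \<alpha> p)
        \<le> C * Fcon_sqrt s0 s u)"
proof (intro exI[of _ 8] allI impI ballI)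
  fix s0 s1 :: real and u :: "pt \<Rightarrow> real" and s and \<alpha> :: nat
  assume H: "1 < s0 \<and> s0 < s1 \<and> C1_on (Kslab s0 s1) u \<and> vanishes_near_cone_boundary (Kslab s0 s1) u"
    and s: "s \<in> {s0..s1}" and a: "\<alpha> \<in> {0, 1, 2}"
  obtain U u' where U: "open U" "Kslab s0 s1 \<subseteq> U" "\<forall>p\<in>U. (u has_derivative u' p) (at p)"
      "\<forall>v. continuous_on U (\<lambda>p. u' p v)"
    using H unfolding C1_on_def by blast
  obtain N where N: "open N" "{(t, x). t = norm x + 1} \<subseteq> N" "\<forall>p\<in>N \<inter> Kslab s0 s1. u p = 0"
    using H unfolding vanishes_near_cone_boundary_def by blast
  interpret slabctx s0 s1 u U u' N
    by unfold_locales (use H U N in auto)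
  show "L2Hstar s (\<lambda>p. hs p / fst p * u p) + L2Hstar s (\<lambda>p. hs p * (hs p / fst p)\<^sup>2 * pd u \<alpha> p)
     \<le> 8 * Fcon_sqrt s0 s u" by (rule main_bound[OF s a])
qed

end
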